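(* Let $\mathbb{K}$ be a field of characteristic not $2$ and $n\geq 3$. Let $\mathcal{V}$ be a linear subspace of $M_n(\mathbb{K})$ in which every matrix has at most two distinct eigenvalues in $\mathbb{K}$, and assume $\mathcal{V}$ is spanned by matrices of rank $1$ and trace $0$. Then $\dim\mathcal{V}\leq n^2/2$. *)

theory Defs
  imports "HOL-Analysis.Analysis"
begin

definition mscale :: "'a::field \<Rightarrow> 'a^'n^'n \<Rightarrow> 'a^'n^'n" where
  "mscale c A = (\<chi> i j. c * A $ i $ j)"

interpretation mat: vector_space "mscale :: 'a::field \<Rightarrow> 'a^'n^'n \<Rightarrow> 'a^'n^'n"
  by unfold_locales (auto simp: mscale_def vec_eq_iff algebra_simps)

definition eigenvalues :: "'a::field^'n^'n \<Rightarrow> 'a set" where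
  "eigenvalues A = {l. \<exists>v. v \<noteq> 0 \<and> A *v v = l *s v}"

end

theory Submission
  imports Defs
begin



definition dotv :: "'a::field^'m \<Rightarrow> 'a^'m \<Rightarrow> 'a" where
  "dotv x y = (\<Sum>i\<in>UNIV. x$i * y$i)"

lemma dotv_add_right[simp]: "dotv x (y + z) = dotv x y + dotv x z"
  by (simp add: dotv_def distrib_left sum.distrib)
lemma dotv_add_left[simp]: "dotv (y + z) x = dotv y x + dotv z x"
  by (simp add: dotv_def distrib_right sum.distrib)
lemma dotv_diff_right[simp]: "dotv x (y - z) = dotv x y - dotv x z"
  by (simp add: dotv_def right_diff_distrib sum_subtractf)
lemma dotv_diff_left[simp]: "dotv (y - z) x = dotv y x - dotv z x"
  by (simp add: dotv_def left_diff_distrib sum_subtractf)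
lemma dotv_scale_right[simp]: "dotv x (c *s y) = c * dotv x y"
  by (simp add: dotv_def sum_distrib_left algebra_simps)
lemma dotv_scale_left[simp]: "dotv (c *s y) x = c * dotv y x"
  by (simp add: dotv_def sum_distrib_left algebra_simps)
lemma dotv_zero_right[simp]: "dotv x 0 = 0"
  by (simp add: dotv_def)
lemma dotv_zero_left[simp]: "dotv 0 x = 0"
  by (simp add: dotv_def)
lemma dotv_sum_right: "dotv x (sum f S) = (\<Sum>s\<in>S. dotv x (f s))"
  by (induction S rule: infinite_finite_induct) auto
lemma dotv_sum_left: "dotv (sum f S) x = (\<Sum>s\<in>S. dotv (f s) x)"
  by (induction S rule: infinite_finite_induct) auto
lemma dotv_axis: "dotv x (axis p 1) = x $ p"
  unfolding dotv_def axis_def by (simp add: if_distrib cong: if_cong)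

lemma two_ne_zero_char:
  assumes "CHAR('a::field) \<noteq> 2" shows "(2::'a) \<noteq> 0"
proof
  assume "(2::'a) = 0"
  then have "of_nat 2 = (0::'a)" by simp
  then have "CHAR('a) dvd 2" by (simp only: of_nat_eq_0_iff_char_dvd)
  then have d: "CHAR('a) dvd 2" .
  have "CHAR('a) \<le> 2" using dvd_imp_le[OF d] by simp
  moreover have "CHAR('a) \<noteq> 0" using d by (metis dvd_0_left_iff zero_neq_numeral)
  ultimately have "CHAR('a) = 1 \<or> CHAR('a) = 2" by linarith
  moreover have "CHAR('a) \<noteq> 1"
    using of_nat_eq_0_iff_char_dvd[of 1, where 'a='a] by auto
  ultimately show False using assms by auto
qed




lemma dual_exists:
  fixes B :: "('a::field^'m) set"
  assumes "finite B" "vec.independent B"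
  shows "\<exists>y. \<forall>b\<in>B. \<forall>b'\<in>B. dotv b' (y b) = (if b' = b then 1 else 0)"
  using assms
proof (induction B rule: finite_induct)
  case empty then show ?case by simp
next
  case (insert b B)
  have indB: "vec.independent B" using insert.prems vec.independent_mono by blast
  have bnot: "b \<notin> vec.span B"
    using insert.prems insert.hyps(2) by (simp add: vec.independent_insert)
  from insert.IH[OF indB] obtain y where y: "\<forall>b1\<in>B. \<forall>b'\<in>B. dotv b' (y b1) = (if b' = b1 then 1 else 0)" by blast
  define c where "c = b - (\<Sum>b'\<in>B. dotv b (y b') *s b')"
  have "c \<noteq> 0"
  proof
    assume "c = 0"
    then have "b = (\<Sum>b'\<in>B. dotv b (y b') *s b')" by (simp add: c_def)
    moreover have "(\<Sum>b'\<in>B. dotv b (y b') *s b') \<in> vec.span B"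
      by (intro vec.span_sum vec.span_scale vec.span_base)
    ultimately show False using bnot by simp
  qed
  then obtain p where p: "c $ p \<noteq> 0" by (auto simp: vec_eq_iff)
  define z where "z = axis p (1::'a)"
  define z' where "z' = z - (\<Sum>b'\<in>B. dotv b' z *s y b')"
  have z'B: "dotv b'' z' = 0" if "b'' \<in> B" for b''
  proof -
    have "(\<Sum>b'\<in>B. dotv b' z * dotv b'' (y b')) = (\<Sum>b'\<in>B. if b' = b'' then dotv b' z else 0)"
      using y that by (intro sum.cong) auto
    also have "\<dots> = dotv b'' z" using that insert.hyps(1) by simp
    finally show ?thesis by (simp add: z'_def dotv_sum_right)
  qed
  have z'b: "dotv b z' = c $ p"
  proof -
    have "dotv b z' = dotv b z - (\<Sum>b'\<in>B. dotv b' z * dotv b (y b'))"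
      by (simp add: z'_def dotv_sum_right)
    also have "\<dots> = dotv c z"
      by (simp add: c_def dotv_sum_left mult.commute)
    also have "\<dots> = c $ p" by (simp add: z_def dotv_axis)
    finally show ?thesis .
  qed
  define w where "w = (1 / c $ p) *s z'"
  have wB: "dotv b'' w = 0" if "b'' \<in> B" for b'' using z'B[OF that] by (simp add: w_def)
  have wb: "dotv b w = 1" using z'b p by (simp add: w_def)
  define y' where "y' = (\<lambda>x. if x = b then w else y x - dotv b (y x) *s w)"
  show ?case
  proof (intro exI[of _ y'] ballI)
    fix b1 b' assume b1: "b1 \<in> insert b B" and b': "b' \<in> insert b B"
    show "dotv b' (y' b1) = (if b' = b1 then 1 else 0)"
    proof (cases "b1 = b")
      case True then show ?thesis using b' wB wb insert.hyps(2) by (auto simp: y'_def)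
    next
      case False
      then have b1B: "b1 \<in> B" using b1 by auto
      show ?thesis
      proof (cases "b' = b")
        case True then show ?thesis using False wb by (simp add: y'_def)
      next
        case False
        then have "b' \<in> B" using b' by auto
        then show ?thesis using y b1B wB \<open>b1 \<noteq> b\<close> by (simp add: y'_def)
      qed
    qed
  qed
qed

lemma orth_dim_bound:
  fixes U W :: "('a::field^'m) set"
  assumes U: "vec.subspace U" and W: "vec.subspace W"
    and orth: "\<forall>u\<in>U. \<forall>w\<in>W. dotv u w = 0"
  shows "vec.dim U + vec.dim W \<le> CARD('m)"
proof -
  obtain B where B: "B \<subseteq> U" "vec.independent B" "U \<subseteq> vec.span B" "card B = vec.dim U"
    using vec.basis_exists by blast
  have fB: "finite B" using B(2) vec.finiteI_independent by blast
  obtain y where y: "\<forall>b\<in>B. \<forall>b'\<in>B. dotv b' (y b) = (if b' = b then 1 else 0)"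
    using dual_exists[OF fB B(2)] by blast
  have injy: "inj_on y B"
  proof
    fix b1 b2 assume "b1 \<in> B" "b2 \<in> B" "y b1 = y b2"
    moreover have "dotv b1 (y b1) = 1" using y \<open>b1 \<in> B\<close> by simp
    ultimately have "dotv b1 (y b2) = 1" by simp
    then show "b1 = b2" using y \<open>b1 \<in> B\<close> \<open>b2 \<in> B\<close> by (auto split: if_splits)
  qed
  have key: "\<And>u b0. b0 \<in> B \<Longrightarrow> dotv b0 (\<Sum>v\<in>y ` B. u v *s v) = u (y b0)"
  proof -
    fix u b0 assume b0: "b0 \<in> B"
    have "dotv b0 (\<Sum>v\<in>y ` B. u v *s v) = (\<Sum>b\<in>B. u (y b) * dotv b0 (y b))"
      by (simp add: dotv_sum_right sum.reindex[OF injy])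
    also have "\<dots> = (\<Sum>b\<in>B. if b = b0 then u (y b) else 0)"
      using y b0 by (intro sum.cong) auto
    also have "\<dots> = u (y b0)" using fB b0 by simp
    finally show "dotv b0 (\<Sum>v\<in>y ` B. u v *s v) = u (y b0)" .
  qed
  have indY: "vec.independent (y ` B)"
    unfolding vec.independent_explicit
  proof (intro conjI allI impI ballI)
    show "finite (y ` B)" using fB by simp
    fix u v assume s: "(\<Sum>v\<in>y ` B. u v *s v) = 0" and v: "v \<in> y ` B"
    then obtain b0 where b0: "b0 \<in> B" "v = y b0" by auto
    show "u v = 0" using key[OF b0(1), of u] s b0 by simp
  qed
  have dimT: "vec.dim (vec.span (y ` B)) = card B"
    using vec.dim_span_eq_card_independent[OF indY] card_image[OF injy] by simp
  have int0: "W \<inter> vec.span (y ` B) = {0}"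
  proof (intro equalityI subsetI)
    fix x assume x: "x \<in> W \<inter> vec.span (y ` B)"
    then obtain u where xu: "x = (\<Sum>v\<in>y ` B. u v *s v)"
      using vec.span_finite[of "y ` B"] fB by auto
    have "u (y b0) = 0" if "b0 \<in> B" for b0
    proof -
      have "dotv b0 x = 0" using orth x B(1) that by auto
      then show ?thesis using key[OF that, of u] xu by simp
    qed
    then show "x \<in> {0}" using xu by (auto intro!: sum.neutral)
  next
    fix x :: "'a^'m" assume "x \<in> {0}" then show "x \<in> W \<inter> vec.span (y ` B)"
      using W vec.subspace_0 vec.span_zero by auto
  qed
  have "vec.dim {p + q |p q. p \<in> W \<and> q \<in> vec.span (y ` B)} + vec.dim (W \<inter> vec.span (y ` B))
        = vec.dim W + vec.dim (vec.span (y ` B))"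
    by (rule vec.dim_sums_Int[OF W vec.subspace_span])
  moreover have "vec.dim {p + q |p q. p \<in> W \<and> q \<in> vec.span (y ` B)} \<le> CARD('m)"
    using vec.dim_subset_UNIV[of "{p + q |p q. p \<in> W \<and> q \<in> vec.span (y ` B)}"]
    by (simp add: vec.dimension_def card_cart_basis)
  ultimately show ?thesis using int0 dimT B(4) by simp
qed




lemma mv_sum: "(A::'a::field^'n^'m) *v (sum f S) = (\<Sum>s\<in>S. A *v f s)"
  by (induction S rule: infinite_finite_induct) (auto simp: matrix_vector_right_distrib)

lemma mv_scale: "(A::'a::field^'n^'m) *v (c *s x) = c *s (A *v x)"
  by (simp add: vec_eq_iff matrix_vector_mult_def sum_distrib_left algebra_simps)

lemma eigvec_indep_aux:
  fixes A :: "'a::field^'n^'n"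
  assumes e: "\<And>l. l \<in> L \<Longrightarrow> e l \<noteq> 0 \<and> A *v e l = l *s e l"
  shows "finite L' \<Longrightarrow> L' \<subseteq> L \<Longrightarrow> (\<Sum>l\<in>L'. a l *s e l) = 0 \<Longrightarrow> \<forall>l\<in>L'. a l = 0"
proof (induction L' arbitrary: a rule: finite_induct)
  case empty then show ?case by simp
next
  case (insert m L')
  have s: "a m *s e m + (\<Sum>l\<in>L'. a l *s e l) = 0" using insert by simp
  have "A *v (a m *s e m + (\<Sum>l\<in>L'. a l *s e l)) = 0" using s by simp
  moreover have "(\<Sum>x\<in>L'. a x *s (A *v e x)) = (\<Sum>l\<in>L'. (a l * l) *s e l)"
    by (rule sum.cong) (use e insert.prems in auto)
  ultimately have s1: "(a m * m) *s e m + (\<Sum>l\<in>L'. (a l * l) *s e l) = 0"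
    using insert.prems e by (simp add: matrix_vector_right_distrib mv_sum mv_scale)
  have s2: "(a m * m) *s e m + (\<Sum>l\<in>L'. (a l * m) *s e l) = 0"
    using arg_cong[OF s, of "\<lambda>x. m *s x"] by (simp add: vec.scale_sum_right algebra_simps)
  have "(\<Sum>l\<in>L'. (a l * (l - m)) *s e l) = 0"
    using arg_cong2[OF s1 s2, of "(-)"] by (simp add: algebra_simps sum_subtractf[symmetric])
  then have "\<forall>l\<in>L'. a l * (l - m) = 0" using insert by (intro insert.IH) auto
  then have aL: "\<forall>l\<in>L'. a l = 0" using insert.hyps(2) by auto
  then have "a m *s e m = 0" using s by simp
  then have "a m = 0" using e[of m] insert.prems by auto
  with aL show ?case by simp
qed

lemma eigenvalues_finite:
  fixes A :: "'a::field^'n^'n"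
  shows "finite (eigenvalues A)"
proof -
  define e where "e l = (SOME v. v \<noteq> 0 \<and> A *v v = l *s v)" for l
  have e: "e l \<noteq> 0 \<and> A *v e l = l *s e l" if "l \<in> eigenvalues A" for l
  proof -
    have "\<exists>v. v \<noteq> 0 \<and> A *v v = l *s v" using that by (simp add: eigenvalues_def)
    then show ?thesis unfolding e_def by (rule someI_ex)
  qed
  have inj: "inj_on e (eigenvalues A)"
  proof
    fix l1 l2 assume l: "l1 \<in> eigenvalues A" "l2 \<in> eigenvalues A" "e l1 = e l2"
    then have "l1 *s e l1 = l2 *s e l1" using e by metis
    then have "(l1 - l2) *s e l1 = 0" by (simp add: algebra_simps)
    then show "l1 = l2" using e[OF l(1)] by auto
  qed
  have "vec.independent (e ` eigenvalues A)"
    unfolding vec.independent_explicit_finite_subsets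
  proof (intro allI impI ballI)
    fix S u v assume S: "S \<subseteq> e ` eigenvalues A" "finite S" and s: "(\<Sum>v\<in>S. u v *s v) = 0" and v: "v \<in> S"
    define L' where "L' = {l \<in> eigenvalues A. e l \<in> S}"
    have SL: "S = e ` L'" using S by (auto simp: L'_def)
    have injL: "inj_on e L'" using inj by (rule inj_on_subset) (auto simp: L'_def)
    have fL: "finite L'" using S(2) SL finite_imageD injL by metis
    have "(\<Sum>l\<in>L'. u (e l) *s e l) = 0" using s SL sum.reindex[OF injL, of "\<lambda>v. u v *s v"] by (simp add: comp_def)
    then have "\<forall>l\<in>L'. u (e l) = 0"
      by (intro eigvec_indep_aux[of "eigenvalues A" e A]) (use fL in \<open>auto simp: L'_def e\<close>)
    then show "u v = 0" using v SL by auto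
  qed
  then have "finite (e ` eigenvalues A)" using vec.finiteI_independent by blast
  then show ?thesis using finite_imageD inj by blast
qed




definition outer :: "'a::field^'n \<Rightarrow> 'a^'n \<Rightarrow> 'a^'n^'n" where
  "outer u v = (\<chi> i j. u$i * v$j)"

lemma rank1_outer:
  fixes A :: "'a::field^'n^'n"
  assumes "rank A = 1"
  shows "\<exists>u v. A = outer u v"
proof -
  obtain B where B: "B \<subseteq> rows A" "vec.independent B" "rows A \<subseteq> vec.span B" "card B = vec.dim (rows A)"
    using vec.basis_exists by blast
  then have "card B = 1" using assms by (simp add: row_rank_def_gen)
  then obtain v where Bv: "B = {v}" using card_1_singletonE by blast
  have "\<exists>k. row i A = k *s v" for i
  proof -
    have "row i A \<in> rows A" by (auto simp: rows_def)
    then have "row i A \<in> vec.span {v}" using B(3) Bv by auto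
    then show ?thesis by (auto simp: vec.span_singleton)
  qed
  then obtain k where k: "\<And>i. row i A = k i *s v" by metis
  have "A = outer (\<chi> i. k i) v"
  proof -
    have "A $ i $ j = k i * v $ j" for i j
      using arg_cong[OF k[of i], of "\<lambda>x. x $ j"] by (simp add: row_def)
    then show ?thesis by (simp add: outer_def vec_eq_iff)
  qed
  then show ?thesis by blast
qed

lemma trace_outer: "trace (outer u v) = dotv u v"
  by (simp add: trace_def outer_def dotv_def)

lemma outer_mv: "outer u v *v x = dotv v x *s u"
  by (simp add: outer_def dotv_def matrix_vector_mult_def vec_eq_iff sum_distrib_left algebra_simps)

lemma mscale_mv: "mscale c A *v x = c *s (A *v x)"
  by (simp add: mscale_def matrix_vector_mult_def vec_eq_iff sum_distrib_left algebra_simps)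

lemma three_kernel:
  fixes a1 a2 a3 b1 b2 b3 :: "'a::field"
  shows "\<exists>x1 x2 x3. (x1 \<noteq> 0 \<or> x2 \<noteq> 0 \<or> x3 \<noteq> 0) \<and> a1*x1 + a2*x2 + a3*x3 = 0 \<and> b1*x1 + b2*x2 + b3*x3 = 0"
proof (cases "a2*b3 - a3*b2 \<noteq> 0 \<or> a3*b1 - a1*b3 \<noteq> 0 \<or> a1*b2 - a2*b1 \<noteq> 0")
  case True
  have "a1*(a2*b3 - a3*b2) + a2*(a3*b1 - a1*b3) + a3*(a1*b2 - a2*b1) = 0" by algebra
  moreover have "b1*(a2*b3 - a3*b2) + b2*(a3*b1 - a1*b3) + b3*(a1*b2 - a2*b1) = 0" by algebra
  ultimately show ?thesis using True by blast
next
  case False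
  then have h: "a2*b3 = a3*b2" "a3*b1 = a1*b3" "a1*b2 = a2*b1" by auto
  show ?thesis
  proof (cases "a1 \<noteq> 0 \<or> a2 \<noteq> 0")
    case True
    have "a1*a2 + a2*(-a1) + a3*0 = 0" by algebra
    moreover have "b1*a2 + b2*(-a1) + b3*0 = 0" using h(3) by (simp add: mult.commute)
    ultimately show ?thesis using True by (metis neg_equal_0_iff_equal)
  next
    case F1: False
    show ?thesis
    proof (cases "a3 \<noteq> 0")
      case True
      have "a1*a3 + a2*0 + a3*(-a1) = 0" by algebra
      moreover have "b1*a3 + b2*0 + b3*(-a1) = 0" using h(2) by (simp add: mult.commute)
      ultimately show ?thesis using True by blast
    next
      case False
      then have a0: "a1 = 0" "a2 = 0" "a3 = 0" using F1 by auto
      show ?thesis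
      proof (cases "b1 \<noteq> 0 \<or> b2 \<noteq> 0")
        case True
        have "b1*b2 + b2*(-b1) + b3*0 = 0" by algebra
        then show ?thesis using True a0 by (metis neg_equal_0_iff_equal mult_zero_left add_0)
      next
        case False
        then have "b1 = 0" "b2 = 0" by auto
        then show ?thesis using a0 by (metis one_neq_zero mult_zero_left mult_zero_right add_0)
      qed
    qed
  qed
qed




lemma three_indices:
  assumes "CARD('n) \<ge> 3"
  shows "\<exists>i j k :: 'n. i \<noteq> j \<and> j \<noteq> k \<and> i \<noteq> k"
proof -
  obtain T :: "'n set" where "card T = 3"
    using obtain_subset_with_card_n[OF assms] by metis
  then have "\<exists>x y z. T = {x, y, z} \<and> x \<noteq> y \<and> y \<noteq> z \<and> x \<noteq> z" by (simp only: card_3_iff)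
  then show ?thesis by metis
qed

lemma kernel_vec:
  fixes v z :: "'a::field^'n"
  assumes "CARD('n) \<ge> 3"
  shows "\<exists>x. x \<noteq> 0 \<and> dotv v x = 0 \<and> dotv z x = 0"
proof -
  obtain i j k :: 'n where d: "i \<noteq> j" "j \<noteq> k" "i \<noteq> k" using three_indices[OF assms] by metis
  obtain x1 x2 x3 where x: "x1 \<noteq> 0 \<or> x2 \<noteq> 0 \<or> x3 \<noteq> 0"
      "v$i*x1 + v$j*x2 + v$k*x3 = 0" "z$i*x1 + z$j*x2 + z$k*x3 = 0"
    using three_kernel[of "v$i" "v$j" "v$k" "z$i" "z$j" "z$k"] by blast
  define y where "y = x1 *s axis i 1 + x2 *s axis j 1 + x3 *s axis k (1::'a)"
  have "y $ i = x1" "y $ j = x2" "y $ k = x3" using d by (simp_all add: y_def axis_def)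
  then have "y \<noteq> 0" using x(1) by auto
  moreover have "dotv v y = x1 * v$i + x2 * v$j + x3 * v$k"
    by (simp add: y_def dotv_axis)
  then have "dotv v y = 0" using x(2) by (simp add: mult.commute)
  moreover have "dotv z y = x1 * z$i + x2 * z$j + x3 * z$k"
    by (simp add: y_def dotv_axis)
  then have "dotv z y = 0" using x(3) by (simp add: mult.commute)
  ultimately show ?thesis by blast
qed




lemma three_eigen:
  fixes u v w z :: "'a::field^'n"
  assumes n3: "CARD('n) \<ge> 3" and two: "(2::'a) \<noteq> 0"
    and uv: "dotv v u = 0" and wz: "dotv z w = 0"
    and c: "c = dotv v w * dotv z u" and c0: "c \<noteq> 0"
  shows "{c, -c, 0} \<subseteq> eigenvalues (mscale c (outer u v) + outer w z)"
proof -
  let ?M = "mscale c (outer u v) + outer w z"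
  have Mx: "?M *v x = (c * dotv v x) *s u + dotv z x *s w" for x
    by (simp add: matrix_vector_mult_add_rdistrib mscale_mv outer_mv)
  have vw: "dotv v w \<noteq> 0" and zu: "dotv z u \<noteq> 0" using c c0 by auto
  have ev: "l \<in> eigenvalues ?M" if l: "l * l = c * c" for l
  proof -
    define q where "q = dotv z u"
    define x where "x = l *s u + q *s w"
    have vx: "dotv v x = q * dotv v w" using uv by (simp add: x_def)
    have zx: "dotv z x = l * q" using wz by (simp add: x_def q_def)
    have "x \<noteq> 0" using vx vw zu by (auto simp: q_def)
    moreover have "?M *v x = l *s x"
    proof -
      have "?M *v x = (c * (q * dotv v w)) *s u + (l * q) *s w" using Mx vx zx by simp
      also have "c * (q * dotv v w) = l * l" using l c by (simp add: q_def algebra_simps)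
      finally show ?thesis by (simp add: x_def algebra_simps vector_add_ldistrib)
    qed
    ultimately show ?thesis by (auto simp: eigenvalues_def)
  qed
  have "0 \<in> eigenvalues ?M"
  proof -
    obtain x where x: "x \<noteq> 0" "dotv v x = 0" "dotv z x = 0" using kernel_vec[OF n3] by blast
    then have "?M *v x = 0 *s x" using Mx by simp
    then show ?thesis using x by (auto simp: eigenvalues_def)
  qed
  then show ?thesis using ev[of c] ev[of "-c"] by auto
qed




definition gform :: "'a::field^'n^'n \<Rightarrow> 'a^'n^'n \<Rightarrow> 'a" where
  "gform X Y = (\<Sum>i\<in>UNIV. \<Sum>j\<in>UNIV. X$i$j * Y$j$i)"

lemma gform_add_left: "gform (X + Y) Z = gform X Z + gform Y Z"
  by (simp add: gform_def distrib_right sum.distrib)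
lemma gform_add_right: "gform Z (X + Y) = gform Z X + gform Z Y"
  by (simp add: gform_def distrib_left sum.distrib)
lemma gform_scale_left: "gform (mscale c X) Z = c * gform X Z"
  by (simp add: gform_def mscale_def sum_distrib_left algebra_simps)
lemma gform_scale_right: "gform Z (mscale c X) = c * gform Z X"
  by (simp add: gform_def mscale_def sum_distrib_left algebra_simps)
lemma gform_zero_left: "gform 0 Z = 0" by (simp add: gform_def)
lemma gform_zero_right: "gform Z 0 = 0" by (simp add: gform_def)

lemma gform_outer: "gform (outer u v) (outer w z) = dotv v w * dotv z u"
proof -
  have "gform (outer u v) (outer w z) = (\<Sum>i\<in>UNIV. \<Sum>j\<in>UNIV. (z$i * u$i) * (v$j * w$j))"
    by (simp add: gform_def outer_def algebra_simps)
  also have "\<dots> = (\<Sum>i\<in>UNIV. z$i * u$i) * (\<Sum>j\<in>UNIV. v$j * w$j)"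
    by (simp add: sum_product)
  finally show ?thesis by (simp add: dotv_def mult.commute)
qed

lemma dotv_comm: "dotv x y = dotv y x"
  by (simp add: dotv_def mult.commute)

definition flat :: "'a::field^'n^'n \<Rightarrow> 'a^('n \<times> 'n)" where
  "flat X = (\<chi> p. X $ fst p $ snd p)"
definition tflat :: "'a::field^'n^'n \<Rightarrow> 'a^('n \<times> 'n)" where
  "tflat X = (\<chi> p. X $ snd p $ fst p)"
definition unflat :: "'a::field^('n \<times> 'n) \<Rightarrow> 'a^'n^'n" where
  "unflat x = (\<chi> i j. x $ (i, j))"
definition unflatT :: "'a::field^('n \<times> 'n) \<Rightarrow> 'a^'n^'n" where
  "unflatT x = (\<chi> i j. x $ (j, i))"

lemma unflat_flat: "unflat (flat X) = X" by (simp add: unflat_def flat_def vec_eq_iff)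
lemma unflatT_tflat: "unflatT (tflat X) = X" by (simp add: unflatT_def tflat_def vec_eq_iff)

lemma lin_flat: "Vector_Spaces.linear mscale (*s) (flat :: 'a::field^'n^'n \<Rightarrow> _)"
  by unfold_locales (auto simp: flat_def mscale_def vec_eq_iff algebra_simps)
lemma lin_tflat: "Vector_Spaces.linear mscale (*s) (tflat :: 'a::field^'n^'n \<Rightarrow> _)"
  by unfold_locales (auto simp: tflat_def mscale_def vec_eq_iff algebra_simps)
lemma lin_unflat: "Vector_Spaces.linear (*s) mscale (unflat :: _ \<Rightarrow> 'a::field^'n^'n)"
  by unfold_locales (auto simp: unflat_def mscale_def vec_eq_iff algebra_simps)
lemma lin_unflatT: "Vector_Spaces.linear (*s) mscale (unflatT :: _ \<Rightarrow> 'a::field^'n^'n)"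
  by unfold_locales (auto simp: unflatT_def mscale_def vec_eq_iff algebra_simps)

lemma flat_unflat: "flat (unflat x) = x" by (simp add: unflat_def flat_def vec_eq_iff)
lemma tflat_unflatT: "tflat (unflatT x) = x" by (simp add: unflatT_def tflat_def vec_eq_iff)
lemma inj_unflat: "inj unflat"
  by (metis flat_unflat injI)
lemma inj_unflatT: "inj unflatT"
  by (metis tflat_unflatT injI)

lemma dotv_flat: "dotv (flat X) (tflat Y) = gform X Y"
proof -
  have "dotv (flat X) (tflat Y) = (\<Sum>p\<in>UNIV \<times> UNIV. X $ fst p $ snd p * Y $ snd p $ fst p)"
    by (simp add: dotv_def flat_def tflat_def)
  also have "\<dots> = gform X Y"
    unfolding gform_def by (subst sum.cartesian_product) (simp add: case_prod_beta)
  finally show ?thesis .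
qed

lemma dim_transfer:
  fixes U :: "('a::field^('n::finite \<times> 'n)) set" and f :: "_ \<Rightarrow> 'a^'n^'n"
  assumes "Vector_Spaces.linear (*s) mscale f" "inj f"
  shows "mat.dim (f ` U) = vec.dim U"
proof -
  interpret p: finite_dimensional_vector_space_pair_1 "(*s)" "cart_basis :: ('a^('n \<times> 'n)) set" mscale
    by unfold_locales
  show ?thesis
    by (rule p.dim_image_eq[OF assms(1)]) (use assms(2) in \<open>auto intro: inj_on_subset\<close>)
qed




theorem mainTheorem11:
  fixes V :: "('a::field^'n^'n) set"
  assumes "CHAR('a) \<noteq> 2"
    and "CARD('n) \<ge> 3"
    and "mat.subspace V"
    and "\<forall>A\<in>V. card (eigenvalues A) \<le> 2"
    and "\<exists>S. S \<subseteq> {A. rank A = 1 \<and> trace A = 0} \<and> mat.span S = V"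
  shows "real (mat.dim V) \<le> real (CARD('n))^2 / 2"
proof -
  have two: "(2::'a) \<noteq> 0" using two_ne_zero_char[OF assms(1)] .
  obtain S where S: "S \<subseteq> {A. rank A = 1 \<and> trace A = 0}" "mat.span S = V" using assms(5) by blast
  have SV: "S \<subseteq> V" using S(2) mat.span_superset by blast
  have gen: "\<exists>u v. A = outer u v \<and> dotv u v = 0" if "A \<in> S" for A
  proof -
    from that S(1) have "rank A = 1" "trace A = 0" by auto
    then obtain u v where "A = outer u v" using rank1_outer by blast
    with \<open>trace A = 0\<close> show ?thesis by (auto simp: trace_outer)
  qed
  have pair: "gform A B = 0" if A: "A \<in> S" and B: "B \<in> S" for A B
  proof (rule ccontr)
    assume ne: "gform A B \<noteq> 0"
    obtain u v where uv: "A = outer u v" "dotv u v = 0" using gen[OF A] by blast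
    obtain w z where wz: "B = outer w z" "dotv w z = 0" using gen[OF B] by blast
    define c where "c = dotv v w * dotv z u"
    have "gform A B = c" by (simp add: uv(1) wz(1) gform_outer c_def)
    then have c0: "c \<noteq> 0" using ne by metis
    define M where "M = mscale c (outer u v) + outer w z"
    have "M \<in> V" unfolding M_def
      using assms(3) SV A B uv(1) wz(1) by (auto intro!: mat.subspace_add mat.subspace_scale)
    then have le2: "card (eigenvalues M) \<le> 2" using assms(4) by blast
    have e1: "dotv v u = 0" using uv(2) dotv_comm by metis
    have e2: "dotv z w = 0" using wz(2) dotv_comm by metis
    have sub: "{c, -c, 0} \<subseteq> eigenvalues M" unfolding M_def
      by (rule three_eigen[OF assms(2) two e1 e2 c_def c0])
    have "c \<noteq> -c"
    proof
      assume "c = -c" then have "2 * c = 0" by simp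
      with two c0 show False by simp
    qed
    then have "card {c, -c, 0} = 3" using c0 by simp
    then have "3 \<le> card (eigenvalues M)"
      using card_mono[OF eigenvalues_finite sub] by simp
    with le2 show False by simp
  qed
  have pair1: "\<forall>B\<in>S. gform X B = 0" if X: "X \<in> V" for X
  proof -
    have "X \<in> mat.span S" using X S(2) by simp
    then show ?thesis
    proof (induction rule: mat.span_induct)
      case base
      show ?case by (rule mat.subspaceI) (auto simp: gform_add_left gform_scale_left gform_zero_left)
    next
      case (step x) then show ?case using pair by blast
    qed
  qed
  have pair2: "gform X Y = 0" if X: "X \<in> V" and Y: "Y \<in> V" for X Y
  proof -
    have "Y \<in> mat.span S" using Y S(2) by simp
    then show ?thesis
    proof (induction rule: mat.span_induct)
      case base
      show ?case by (rule mat.subspaceI) (auto simp: gform_add_right gform_scale_right gform_zero_right)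
    next
      case (step y) then show ?case using pair1[OF X] by blast
    qed
  qed
  interpret lf: Vector_Spaces.linear mscale "(*s)" "flat :: 'a^'n^'n \<Rightarrow> _" by (rule lin_flat)
  interpret ltf: Vector_Spaces.linear mscale "(*s)" "tflat :: 'a^'n^'n \<Rightarrow> _" by (rule lin_tflat)
  have U: "vec.subspace (flat ` V)" by (rule lf.subspace_image[OF assms(3)])
  have W: "vec.subspace (tflat ` V)" by (rule ltf.subspace_image[OF assms(3)])
  have orth: "\<forall>u\<in>flat ` V. \<forall>w\<in>tflat ` V. dotv u w = 0"
    using pair2 by (auto simp: dotv_flat)
  have b: "vec.dim (flat ` V) + vec.dim (tflat ` V) \<le> CARD('n \<times> 'n)"
    by (rule orth_dim_bound[OF U W orth])
  have "unflat ` flat ` V = V" by (simp add: image_image unflat_flat)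
  then have d1: "vec.dim (flat ` V) = mat.dim V"
    using dim_transfer[OF lin_unflat inj_unflat, of "flat ` V"] by simp
  have "unflatT ` tflat ` V = V" by (simp add: image_image unflatT_tflat)
  then have d2: "vec.dim (tflat ` V) = mat.dim V"
    using dim_transfer[OF lin_unflatT inj_unflatT, of "tflat ` V"] by simp
  have "2 * mat.dim V \<le> CARD('n) ^ 2"
    using b d1 d2 by (simp add: power2_eq_square)
  then have "real (2 * mat.dim V) \<le> real (CARD('n) ^ 2)" by linarith
  then show ?thesis by simp
qed


end
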